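(* Let $(f,g),(f',g')\in\Theta$ both satisfy the diversity condition and satisfy $p_{f,g}(y\mid x)=p_{f',g'}(y\mid x)$ for all $(x,y)\in\mathcal X\times\mathcal Y$. Then for any two choices of pivot and subset, $(\tilde y,\mathcal J)$ and $(\hat y,\mathcal K)$ with $\mathcal J\subseteq\mathcal Y\setminus\{\tilde y\}$, $\mathcal K\subseteq\mathcal Y\setminus\{\hat y\}$, $|\mathcal J|=|\mathcal K|=m$, such that the corresponding shifted unembedding matrices $\tilde L_{\mathcal J}$ and $\hat L_{\mathcal K}$ of $(f,g)$ are invertible, one has $$\tilde L_{\mathcal J}^{-\top}\tilde L_{\mathcal J}'^{\top}=\hat L_{\mathcal K}^{-\top}\hat L_{\mathcal K}'^{\top}.$$
   Context: Model class $\Theta$: pairs $(f,g)$, $f:\mathcal X\to\mathbb R^m$, $g:\mathcal Y\to\mathbb R^m$, $\mathcal Y$ finite with $k>m$ labels, $\sum_y g(y)=0$, inducing $p_{f,g}(y\mid x)\propto\exp(f(x)^\top g(y))$; $p_x$ is the data distribution. Logits $u(x)=(f(x)^\top g(y))_{y\in\mathcal Y}$. Diversity condition: $\dim\mathrm{span}\{u(x):x\in\mathrm{supp}(p_x)\}=m$. For a pivot $\tilde y$ and $\mathcal J=\{y_1,\dots,y_m\}\subseteq\mathcal Y\setminus\{\tilde y\}$, $\tilde L_{\mathcal J}=(g(y_1)-g(\tilde y)\ \cdots\ g(y_m)-g(\tilde y))\in\mathbb R^{m\times m}$; $\tilde L'_{\mathcal J}$ is defined in the same way from $g'$; $\hat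 L_{\mathcal K},\hat L'_{\mathcal K}$ likewise for pivot $\hat y$ and subset $\mathcal K$. *)

theory Defs
  imports "HOL-Analysis.Analysis"
begin

definition in_Theta :: "('x \<Rightarrow> real^'m) \<Rightarrow> ('y::finite \<Rightarrow> real^'m) \<Rightarrow> bool" where
  "in_Theta f g \<longleftrightarrow> CARD('y) > CARD('m) \<and> (\<Sum>y\<in>UNIV. g y) = 0"

definition cond_prob :: "('x \<Rightarrow> real^'m) \<Rightarrow> ('y::finite \<Rightarrow> real^'m) \<Rightarrow> 'x \<Rightarrow> 'y \<Rightarrow> real" where
  "cond_prob f g x y = exp (f x \<bullet> g y) / (\<Sum>y'\<in>UNIV. exp (f x \<bullet> g y'))"

definition logits :: "('x \<Rightarrow> real^'m) \<Rightarrow> ('y::finite \<Rightarrow> real^'m) \<Rightarrow> 'x \<Rightarrow> real^'y" where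
  "logits f g x = (\<chi> y. f x \<bullet> g y)"

text \<open>Diversity condition relative to the support S of the data distribution p_x.\<close>
definition diverse :: "'x set \<Rightarrow> ('x \<Rightarrow> real^'m) \<Rightarrow> ('y::finite \<Rightarrow> real^'m) \<Rightarrow> bool" where
  "diverse S f g \<longleftrightarrow> dim (span (logits f g ` S)) = CARD('m)"

text \<open>Shifted unembedding matrix for pivot yp and the ordered subset J = {j 1, ..., j m}:
  column c is g(j c) - g(yp).\<close>
definition shifted_unemb :: "('y \<Rightarrow> real^'m) \<Rightarrow> 'y \<Rightarrow> ('m \<Rightarrow> 'y) \<Rightarrow> real^'m^'m" where
  "shifted_unemb g yp j = (\<chi> r c. (g (j c) - g yp) $ r)"

end

theory Submission
  imports Defs
begin

lemma minv_right:
  fixes A :: "real^'n^'n"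
  assumes "invertible A"
  shows "A ** matrix_inv A = mat 1"
  using someI_ex[OF assms[unfolded invertible_def]] unfolding matrix_inv_def by blast

lemma shift_eq:
  fixes f f' :: "'x \<Rightarrow> real^'m" and g g' :: "'y::finite \<Rightarrow> real^'m"
  assumes "\<And>x y. cond_prob f g x y = cond_prob f' g' x y"
  shows "f x \<bullet> (g y - g yp) = f' x \<bullet> (g' y - g' yp)"
proof -
  define Z where "Z = (\<Sum>y'\<in>UNIV. exp (f x \<bullet> g y'))"
  define Z' where "Z' = (\<Sum>y'\<in>UNIV. exp (f' x \<bullet> g' y'))"
  have Zp: "Z > 0" unfolding Z_def by (rule sum_pos) auto
  have Zp': "Z' > 0" unfolding Z'_def by (rule sum_pos) auto
  have e1: "exp (f x \<bullet> g y) / Z = exp (f' x \<bullet> g' y) / Z'"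
    using assms[of x y] unfolding cond_prob_def Z_def Z'_def .
  have e2: "exp (f x \<bullet> g yp) / Z = exp (f' x \<bullet> g' yp) / Z'"
    using assms[of x yp] unfolding cond_prob_def Z_def Z'_def .
  have "exp (f x \<bullet> g y) * exp (f' x \<bullet> g' yp) = exp (f' x \<bullet> g' y) * exp (f x \<bullet> g yp)"
  proof -
    have a: "exp (f x \<bullet> g y) * Z' = exp (f' x \<bullet> g' y) * Z" using e1 Zp Zp' by (simp add: divide_eq_eq)
    have b: "exp (f x \<bullet> g yp) * Z' = exp (f' x \<bullet> g' yp) * Z" using e2 Zp Zp' by (simp add: divide_eq_eq)
    have "(exp (f x \<bullet> g y) * exp (f' x \<bullet> g' yp)) * (Z * Z') = (exp (f x \<bullet> g y) * Z') * (exp (f' x \<bullet> g' yp) * Z)"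
      by (simp add: ac_simps)
    also have "\<dots> = (exp (f' x \<bullet> g' y) * Z) * (exp (f x \<bullet> g yp) * Z')" by (simp add: a b)
    also have "\<dots> = (exp (f' x \<bullet> g' y) * exp (f x \<bullet> g yp)) * (Z * Z')" by (simp add: ac_simps)
    finally show ?thesis using Zp Zp' by simp
  qed
  hence "exp (f x \<bullet> g y + f' x \<bullet> g' yp) = exp (f' x \<bullet> g' y + f x \<bullet> g yp)"
    by (simp add: exp_add)
  hence "f x \<bullet> g y + f' x \<bullet> g' yp = f' x \<bullet> g' y + f x \<bullet> g yp" by simp
  thus ?thesis by (simp add: inner_diff_right)
qed

lemma key:
  fixes f f' :: "'x \<Rightarrow> real^'m" and g g' :: "'y::finite \<Rightarrow> real^'m"
    and J :: "'m \<Rightarrow> 'y"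
  assumes "\<And>x y. cond_prob f g x y = cond_prob f' g' x y"
    and "invertible (shifted_unemb g yp J)"
  shows "(transpose (matrix_inv (shifted_unemb g yp J)) ** transpose (shifted_unemb g' yp J)) *v f' x = f x"
proof -
  let ?L = "shifted_unemb g yp J" and ?L' = "shifted_unemb g' yp J"
  have tv: "transpose (shifted_unemb h yp J) *v v = (\<chi> c. (h (J c) - h yp) \<bullet> v)" for h :: "'y \<Rightarrow> real^'m" and v
    by (simp add: vec_eq_iff matrix_vector_mult_def transpose_def shifted_unemb_def inner_vec_def mult.commute)
  have eq: "transpose ?L' *v f' x = transpose ?L *v f x"
    unfolding tv using shift_eq[OF assms(1)] by (simp add: vec_eq_iff inner_commute)
  have id: "transpose (matrix_inv ?L) ** transpose ?L = mat 1"
    using minv_right[OF assms(2)] by (metis matrix_transpose_mul transpose_mat)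
  have "(transpose (matrix_inv ?L) ** transpose ?L') *v f' x = transpose (matrix_inv ?L) *v (transpose ?L' *v f' x)"
    by (rule matrix_vector_mul_assoc[symmetric])
  also have "\<dots> = (transpose (matrix_inv ?L) ** transpose ?L) *v f x"
    by (simp only: eq matrix_vector_mul_assoc)
  also have "\<dots> = f x" by (simp only: id matrix_vector_mul_lid)
  finally show ?thesis .
qed

theorem mainTheorem10:
  fixes S :: "'x set"
    and f f' :: "'x \<Rightarrow> real^'m"
    and g g' :: "'y::finite \<Rightarrow> real^'m"
    and yt yh :: 'y
    and J K :: "'m \<Rightarrow> 'y"
  assumes "in_Theta f g" and "in_Theta f' g'"
    and "diverse S f g" and "diverse S f' g'"
    and "\<And>x y. cond_prob f g x y = cond_prob f' g' x y"
    and "inj J" and "yt \<notin> range J"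
    and "inj K" and "yh \<notin> range K"
    and "invertible (shifted_unemb g yt J)"
    and "invertible (shifted_unemb g yh K)"
  shows "transpose (matrix_inv (shifted_unemb g yt J)) ** transpose (shifted_unemb g' yt J)
       = transpose (matrix_inv (shifted_unemb g yh K)) ** transpose (shifted_unemb g' yh K)"
    (is "?A = ?B")
proof -
  define h where "h = (\<lambda>v::real^'m. (\<chi> y. v \<bullet> g' y) :: real^'y)"
  have lh: "linear h" unfolding h_def
    by (rule linearI) (simp_all add: vec_eq_iff inner_add_left)
  have "logits f' g' ` S = h ` (f' ` S)" unfolding logits_def h_def by auto
  hence "CARD('m) = dim (h ` (f' ` S))" using assms(4) unfolding diverse_def by (simp add: dim_span)
  also have "\<dots> \<le> dim (f' ` S)" by (rule dim_image_le[OF lh])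
  finally have "dim (f' ` S) \<ge> CARD('m)" .
  hence "dim (f' ` S) = DIM(real^'m)" using dim_subset_UNIV_cart[of "f' ` S"] by simp
  hence sp: "span (f' ` S) = UNIV" by (simp only: dim_eq_full)
  have "?A *v v = ?B *v v" for v
  proof (rule linear_eq_on_span[of "\<lambda>v. ?A *v v" "\<lambda>v. ?B *v v" "f' ` S"])
    fix w assume "w \<in> f' ` S"
    then obtain x where "w = f' x" by auto
    thus "?A *v w = ?B *v w" using key[OF assms(5) assms(10)] key[OF assms(5) assms(11)] by simp
  qed (auto simp: sp)
  thus ?thesis by (simp add: matrix_eq)
qed

end
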